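(* Let $x_0\in\mathbb{R}\cup\{+\infty\}$, $T<x_0$, $I:=[T,x_0)$, and let $\phi_1,\phi_2\in C^1(I)$ with $\phi_2(x)=o(\phi_1(x))$ as $x\to x_0$, $\phi_1(x)\neq0$, $\phi_2(x)\neq0$ and $W(x):=W(\phi_1,\phi_2;x)\neq0$ for all $x\in I$. Put $\Phi(x):=\phi_2(T)\phi_1(x)-\phi_1(T)\phi_2(x)$. Then, as $x\to x_0$, $$\Phi(x)\sim\phi_2(T)\phi_1(x),\qquad W(x)\Phi(x)^{-2}\sim\frac{1}{\phi_2(T)^2}\Big(\frac{\phi_2(x)}{\phi_1(x)}\Big)',\qquad \int_x^{x_0}W(t)\Phi(t)^{-2}\,dt\sim-\frac{1}{\phi_2(T)^2}\,\frac{\phi_2(x)}{\phi_1(x)},$$ and for every $x\in(T,x_0)$ the improper integral converges with $$\int_x^{x_0}W(t)\Phi(t)^{-2}\,dt=-\frac{1}{\phi_2(T)}\,\frac{\phi_2(x)}{\Phi(x)}.$$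
   Context: $W(g,h;x):=g(x)h'(x)-g'(x)h(x)$. Limits as $x\to x_0$ are for $x<x_0$. *)

theory Defs
  imports "HOL-Analysis.Analysis" "HOL-Library.Landau_Symbols"
begin

definition approach :: "ereal \<Rightarrow> real filter" where
  "approach x0 = (if x0 = \<infinity> then at_top else at_left (real_of_ereal x0))"

definition wronskian :: "(real \<Rightarrow> real) \<Rightarrow> (real \<Rightarrow> real) \<Rightarrow> (real \<Rightarrow> real) \<Rightarrow> (real \<Rightarrow> real) \<Rightarrow> real \<Rightarrow> real" where
  "wronskian g g' h h' x = g x * h' x - g' x * h x"

definition improper_integral_converges_to :: "(real \<Rightarrow> real) \<Rightarrow> real \<Rightarrow> ereal \<Rightarrow> real \<Rightarrow> bool" where
  "improper_integral_converges_to f x x0 L \<longleftrightarrow>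
     (\<forall>y. x \<le> y \<and> ereal y < x0 \<longrightarrow> f integrable_on {x..y}) \<and>
     ((\<lambda>y. integral {x..y} f) \<longlongrightarrow> L) (approach x0)"

definition improper_integral :: "(real \<Rightarrow> real) \<Rightarrow> real \<Rightarrow> ereal \<Rightarrow> real" where
  "improper_integral f x x0 = Lim (approach x0) (\<lambda>y. integral {x..y} f)"

end

theory Submission
  imports Defs
begin

lemma approach_ev:
  assumes "ereal T < x0"
  shows "eventually (\<lambda>x. T < x \<and> ereal x < x0) (approach x0)"
proof (cases "x0 = \<infinity>")
  case True
  then show ?thesis by (simp add: approach_def eventually_gt_at_top)
next
  case False
  then obtain r where r: "x0 = ereal r" using assms by (cases x0) auto
  then have "T < r" using assms by simp
  then have "eventually (\<lambda>x. x \<in> {T<..<r}) (at_left r)" by (rule eventually_at_left_real)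
  then show ?thesis using r by (simp add: approach_def)
qed

lemma approach_nontriv:
  assumes "ereal T < x0"
  shows "approach x0 \<noteq> bot"
proof (cases "x0 = \<infinity>")
  case True
  then show ?thesis by (simp add: approach_def)
next
  case False
  then show ?thesis by (simp add: approach_def)
qed

lemma ereal_lt_trans': "(t::real) < x \<Longrightarrow> ereal x < x0 \<Longrightarrow> ereal t < x0"
  by (metis less_ereal.simps(1) order.strict_trans)

lemma ereal_le_trans': "(t::real) \<le> x \<Longrightarrow> ereal x < x0 \<Longrightarrow> ereal t < x0"
  by (metis less_eq_ereal_def ereal_less_eq(3) order.strict_trans1)

theorem lemma7p3:
  fixes x0 :: ereal and T :: real
    and \<phi>1 \<phi>2 \<phi>1' \<phi>2' :: "real \<Rightarrow> real"
  defines "I \<equiv> {x. T \<le> x \<and> ereal x < x0}"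
  defines "W \<equiv> wronskian \<phi>1 \<phi>1' \<phi>2 \<phi>2'"
  defines "\<Phi> \<equiv> (\<lambda>x. \<phi>2 T * \<phi>1 x - \<phi>1 T * \<phi>2 x)"
  assumes "ereal T < x0"
    and "\<And>x. x \<in> I \<Longrightarrow> (\<phi>1 has_real_derivative \<phi>1' x) (at x within I)"
    and "\<And>x. x \<in> I \<Longrightarrow> (\<phi>2 has_real_derivative \<phi>2' x) (at x within I)"
    and "continuous_on I \<phi>1'" and "continuous_on I \<phi>2'"
    and "\<phi>2 \<in> o[approach x0](\<phi>1)"
    and "\<And>x. x \<in> I \<Longrightarrow> \<phi>1 x \<noteq> 0"
    and "\<And>x. x \<in> I \<Longrightarrow> \<phi>2 x \<noteq> 0"
    and "\<And>x. x \<in> I \<Longrightarrow> W x \<noteq> 0"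
  shows "(\<Phi> \<sim>[approach x0] (\<lambda>x. \<phi>2 T * \<phi>1 x)) \<and>
     ((\<lambda>x. W x / (\<Phi> x)\<^sup>2) \<sim>[approach x0]
           (\<lambda>x. 1 / (\<phi>2 T)\<^sup>2 * deriv (\<lambda>t. \<phi>2 t / \<phi>1 t) x)) \<and>
     ((\<lambda>x. improper_integral (\<lambda>t. W t / (\<Phi> t)\<^sup>2) x x0) \<sim>[approach x0]
           (\<lambda>x. - (1 / (\<phi>2 T)\<^sup>2) * (\<phi>2 x / \<phi>1 x))) \<and>
     (\<forall>x. T < x \<and> ereal x < x0 \<longrightarrow>
           improper_integral_converges_to (\<lambda>t. W t / (\<Phi> t)\<^sup>2) x x0
             (- (1 / \<phi>2 T) * (\<phi>2 x / \<Phi> x)))"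
proof -
  note T0 = assms(4) and d1 = assms(5) and d2 = assms(6) and small = assms(9)
    and nz1 = assms(10) and nz2 = assms(11) and nzW = assms(12)
  define c where "c = \<phi>2 T"
  define a where "a = \<phi>1 T"
  have TI: "T \<in> I" using T0 by (simp add: I_def)
  have c0: "c \<noteq> 0" using nz2[OF TI] by (simp add: c_def)
  have a0: "a \<noteq> 0" using nz1[OF TI] by (simp add: a_def)
  define g where "g = (\<lambda>t. \<phi>2 t / \<phi>1 t)"
  have dg: "(g has_real_derivative W x / (\<phi>1 x)\<^sup>2) (at x within I)" if "x \<in> I" for x
  proof -
    have "(g has_real_derivative (\<phi>2' x * \<phi>1 x - \<phi>2 x * \<phi>1' x) / (\<phi>1 x * \<phi>1 x)) (at x within I)"
      unfolding g_def by (rule DERIV_divide[OF d2[OF that] d1[OF that] nz1[OF that]])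
    moreover have "(\<phi>2' x * \<phi>1 x - \<phi>2 x * \<phi>1' x) / (\<phi>1 x * \<phi>1 x) = W x / (\<phi>1 x)\<^sup>2"
      by (simp add: W_def wronskian_def power2_eq_square algebra_simps)
    ultimately show ?thesis by simp
  qed
  have interior: "(f has_real_derivative D) (at x)"
    if H: "(f has_real_derivative D) (at x within I)" "T < x" "ereal x < x0" for f D x
  proof -
    obtain b where b: "ereal x < ereal b" "ereal b < x0" using ereal_dense2[OF H(3)] by blast
    have sub: "{T<..<b} \<subseteq> I"
      using b(2) by (auto simp: I_def intro: ereal_lt_trans')
    have "(f has_real_derivative D) (at x within {T<..<b})"
      by (rule has_field_derivative_subset[OF H(1) sub])
    moreover have "at x within {T<..<b} = at x"
      using b(1) H(2) by (intro at_within_open) auto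
    ultimately show ?thesis by simp
  qed
  have Phi_nz: "\<Phi> x \<noteq> 0" if "x \<in> I" "x \<noteq> T" for x
  proof
    assume P: "\<Phi> x = 0"
    have xT: "T < x" "ereal x < x0" using that by (auto simp: I_def)
    have "g T = g x"
      using P nz1[OF that(1)] nz1[OF TI] unfolding g_def \<Phi>_def
      by (simp add: field_simps)
    moreover have sub: "{T..x} \<subseteq> I" using xT by (auto simp: I_def intro: ereal_le_trans')
    moreover have "continuous_on {T..x} g"
      by (rule DERIV_continuous_on[of _ _ "\<lambda>t. W t / (\<phi>1 t)\<^sup>2"])
         (use sub dg has_field_derivative_subset in blast)
    moreover have "g differentiable (at z)" if "T < z" "z < x" for z
    proof -
      have zI: "z \<in> I" using that sub by auto
      have "(g has_real_derivative W z / (\<phi>1 z)\<^sup>2) (at z)"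
        by (rule interior[OF dg[OF zI] that(1) ereal_lt_trans'[OF that(2) xT(2)]])
      then show ?thesis using real_differentiable_def by blast
    qed
    ultimately obtain z where z: "T < z" "z < x" "DERIV g z :> 0"
      using Rolle[of T x g] xT by blast
    have zI: "z \<in> I" using z sub by auto
    have "DERIV g z :> W z / (\<phi>1 z)\<^sup>2"
      by (rule interior[OF dg[OF zI] z(1) ereal_lt_trans'[OF z(2) xT(2)]])
    then have "W z / (\<phi>1 z)\<^sup>2 = 0" using z(3) DERIV_unique by blast
    then show False using nzW[OF zI] nz1[OF zI] by simp
  qed
  have ev: "eventually (\<lambda>x. T < x \<and> ereal x < x0) (approach x0)" by (rule approach_ev[OF T0])
  have nt: "approach x0 \<noteq> bot" by (rule approach_nontriv[OF T0])
  have P1: "\<Phi> \<sim>[approach x0] (\<lambda>x. c * \<phi>1 x)"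
  proof (rule smallo_imp_asymp_equiv)
    have "(\<lambda>x. - a * \<phi>2 x) \<in> o[approach x0](\<lambda>x. c * \<phi>1 x)"
      using small a0 c0 by simp
    moreover have "(\<lambda>x. \<Phi> x - c * \<phi>1 x) = (\<lambda>x. - a * \<phi>2 x)"
      by (simp add: \<Phi>_def a_def c_def)
    ultimately show "(\<lambda>x. \<Phi> x - c * \<phi>1 x) \<in> o[approach x0](\<lambda>x. c * \<phi>1 x)" by simp
  qed
  have P2: "(\<lambda>x. W x / (\<Phi> x)\<^sup>2) \<sim>[approach x0] (\<lambda>x. 1 / c\<^sup>2 * deriv g x)"
  proof -
    have A: "(\<lambda>x. W x / (\<Phi> x)\<^sup>2) \<sim>[approach x0] (\<lambda>x. W x / (c * \<phi>1 x)\<^sup>2)"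
      by (intro asymp_equiv_divide asymp_equiv_refl asymp_equiv_power P1)
    have B: "eventually (\<lambda>x. W x / (c * \<phi>1 x)\<^sup>2 = 1 / c\<^sup>2 * deriv g x) (approach x0)"
      using ev
    proof (rule eventually_mono)
      fix x assume x: "T < x \<and> ereal x < x0"
      then have xI: "x \<in> I" by (auto simp: I_def)
      have "deriv g x = W x / (\<phi>1 x)\<^sup>2"
        using interior[OF dg[OF xI]] x by (intro DERIV_imp_deriv) auto
      then show "W x / (c * \<phi>1 x)\<^sup>2 = 1 / c\<^sup>2 * deriv g x"
        by (simp add: power_mult_distrib)
    qed
    show ?thesis by (rule asymp_equiv_transfer[OF A _ B]) simp
  qed
  define h where "h = (\<lambda>t. \<phi>2 t / \<Phi> t)"
  define f where "f = (\<lambda>t. W t / (\<Phi> t)\<^sup>2)"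
  have dh: "((\<lambda>t. h t / c) has_real_derivative f t) (at t within I)"
    if "t \<in> I" "t \<noteq> T" for t
  proof -
    have dP: "(\<Phi> has_real_derivative c * \<phi>1' t - a * \<phi>2' t) (at t within I)"
      unfolding \<Phi>_def c_def a_def
      by (intro DERIV_diff DERIV_cmult d1 d2 that)
    have "(h has_real_derivative (\<phi>2' t * \<Phi> t - \<phi>2 t * (c * \<phi>1' t - a * \<phi>2' t)) / (\<Phi> t * \<Phi> t))
          (at t within I)"
      unfolding h_def by (rule DERIV_divide[OF d2[OF that(1)] dP Phi_nz[OF that]])
    then have "((\<lambda>t. h t / c) has_real_derivative
       (\<phi>2' t * \<Phi> t - \<phi>2 t * (c * \<phi>1' t - a * \<phi>2' t)) / (\<Phi> t * \<Phi> t) / c) (at t within I)"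
      by (rule DERIV_cdivide)
    moreover have "(\<phi>2' t * \<Phi> t - \<phi>2 t * (c * \<phi>1' t - a * \<phi>2' t)) / (\<Phi> t * \<Phi> t) / c = f t"
    proof -
      have num: "\<phi>2' t * \<Phi> t - \<phi>2 t * (c * \<phi>1' t - a * \<phi>2' t) = c * W t"
        by (simp add: W_def wronskian_def \<Phi>_def a_def c_def algebra_simps)
      show ?thesis unfolding num f_def using c0 by (simp add: power2_eq_square)
    qed
    ultimately show ?thesis by simp
  qed
  have hint: "(f has_integral (h y / c - h x / c)) {x..y}"
    if "T < x" "x \<le> y" "ereal y < x0" for x y
  proof (rule fundamental_theorem_of_calculus[OF that(2)])
    fix t assume t: "t \<in> {x..y}"
    have sub: "{x..y} \<subseteq> I" using that by (auto simp: I_def intro: ereal_le_trans')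
    have "t \<in> I" "t \<noteq> T" using t sub that by auto
    then show "((\<lambda>t. h t / c) has_vector_derivative f t) (at t within {x..y})"
      using dh has_field_derivative_subset[OF _ sub]
      by (simp add: has_real_derivative_iff_has_vector_derivative[symmetric])
  qed
  have g0: "(g \<longlongrightarrow> 0) (approach x0)"
    unfolding g_def by (rule smalloD_tendsto[OF small])
  have h0: "(h \<longlongrightarrow> 0) (approach x0)"
  proof -
    have "((\<lambda>y. g y / (c - a * g y)) \<longlongrightarrow> 0 / (c - a * 0)) (approach x0)"
      using c0 by (intro tendsto_intros g0) auto
    then have lim: "((\<lambda>y. g y / (c - a * g y)) \<longlongrightarrow> 0) (approach x0)" by simp
    have "eventually (\<lambda>y. g y / (c - a * g y) = h y) (approach x0)"
      using ev
    proof (rule eventually_mono)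
      fix y assume "T < y \<and> ereal y < x0"
      then have yI: "y \<in> I" by (auto simp: I_def)
      show "g y / (c - a * g y) = h y"
        using nz1[OF yI] by (simp add: g_def h_def \<Phi>_def a_def c_def field_simps)
    qed
    then show ?thesis by (rule Lim_transform_eventually[OF lim])
  qed
  have P4: "improper_integral_converges_to f x x0 (- (1 / c) * h x)"
    if x: "T < x" "ereal x < x0" for x
  proof -
    have "\<forall>y. x \<le> y \<and> ereal y < x0 \<longrightarrow> f integrable_on {x..y}"
      using hint x by blast
    moreover have "((\<lambda>y. integral {x..y} f) \<longlongrightarrow> - (1 / c) * h x) (approach x0)"
    proof -
      have "((\<lambda>y. h y / c - h x / c) \<longlongrightarrow> 0 / c - h x / c) (approach x0)"
        using c0 by (intro tendsto_intros h0)
      then have lim: "((\<lambda>y. h y / c - h x / c) \<longlongrightarrow> - (1 / c) * h x) (approach x0)" by simp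
      have "eventually (\<lambda>y. h y / c - h x / c = integral {x..y} f) (approach x0)"
        using approach_ev[OF x(2)]
      proof (rule eventually_mono)
        fix y assume "x < y \<and> ereal y < x0"
        then show "h y / c - h x / c = integral {x..y} f"
          using hint[of x y] x by (simp add: integral_unique)
      qed
      then show ?thesis by (rule Lim_transform_eventually[OF lim])
    qed
    ultimately show ?thesis by (simp add: improper_integral_converges_to_def)
  qed
  have P3: "(\<lambda>x. improper_integral f x x0) \<sim>[approach x0] (\<lambda>x. - (1 / c\<^sup>2) * (\<phi>2 x / \<phi>1 x))"
  proof -
    have "(\<lambda>x. - (1 / c) * h x) \<sim>[approach x0] (\<lambda>x. - (1 / c) * (\<phi>2 x / (c * \<phi>1 x)))"
      unfolding h_def by (intro asymp_equiv_mult asymp_equiv_divide asymp_equiv_refl P1)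
    moreover have "eventually (\<lambda>x. - (1 / c) * h x = improper_integral f x x0) (approach x0)"
      using ev
    proof (rule eventually_mono)
      fix x assume x: "T < x \<and> ereal x < x0"
      have "((\<lambda>y. integral {x..y} f) \<longlongrightarrow> - (1 / c) * h x) (approach x0)"
        using P4 x by (simp add: improper_integral_converges_to_def)
      then show "- (1 / c) * h x = improper_integral f x x0"
        unfolding improper_integral_def using nt by (simp add: tendsto_Lim)
    qed
    moreover have "eventually (\<lambda>x. - (1 / c) * (\<phi>2 x / (c * \<phi>1 x)) = - (1 / c\<^sup>2) * (\<phi>2 x / \<phi>1 x)) (approach x0)"
      by (intro always_eventually allI) (simp add: power2_eq_square)
    ultimately show ?thesis by (rule asymp_equiv_transfer)
  qed
  show ?thesis
    using P1 P2 P3 P4 unfolding c_def[symmetric] f_def[symmetric] g_def[symmetric] h_def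
    by simp
qed

end
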